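(* Let $(\mathcal I,T)$ be of class $\mathcal{DR}$, let $\mu$ be an admissible probability measure with density $\phi$, and fix a real $s>0$. Then the following identity holds in the ring of formal power series in $v,t$: $$\sum_{w\in\{0,1\}^\star}v^{|w|}\,t^{n(w)}\,p_\mu(w)^s=\sum_{n\ge0}v^n\,q(n)^s\sum_{k\ge0}t^k\,\mathbb G_{v,s}^k\big[S[\phi]^s\big](0,q(n)).$$ (For fixed powers of $v$ and $t$, the coefficient on the right-hand side is a finite sum.)
   Context: Let $\mathcal I=[0,1]$. A binary dynamical system is given by $c\in]0,1[$ and two $C^2$ bijections, $a:[0,1]\to[0,c]$ and $b:[0,1]\to[c,1]$. The map $T$ equals $a^{-1}$ on $]0,c[$ and $b^{-1}$ on $]c,1[$. Class $\mathcal{DR}$: $a$ is increasing, $b$ is decreasing, $a(0)=0$, $a(1)=c$, $b(0)=1$, $b(1)=c$, $a'>0$ and $b'<0$ on $[0,1]$, and $a'(x)<1$, $b'(x)>-1$ for $x\in]0,1]$. Coding: $h_0=a$, $h_1=b$; for $w=w_1\cdots w_k$, $h_w=h_{w_1}\circ\cdots\circ h_{w_k}$ and $\mathcal I_w=h_w(\mathcal I)$. Here $\{0,1\}^\star$ is the set of finite words (including the empty word $\varepsilon$, with $h_\varepsilon=\mathrm{id}$), $|w|$ is the length of $w$, and $n(w)$ is its number of ones. A probability $\mu$ is admissible if it has a strictly positive density $\phi\in C^1([0,1])$. Set $p_\mu(w)=\mu(\mathcal I_w)$. Let $q(n)=a^n(1)$, and $g_m=a^{m-1}\circ b$ for $m\ge1$.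 For a function $F$ on $[0,1]^2$ and $x\neq y$, define $$\mathbb G_{v,s}[F](x,y)=\sum_{m\ge1}v^m\Big|\frac{g_m(x)-g_m(y)}{x-y}\Big|^sF(g_m(x),g_m(y)),$$ with the diagonal value obtained by replacing the difference quotient by $|g_m'(x)|$. $S[\phi]$ is the function on $[0,1]^2$ defined by $$S[\phi](x,y)=\frac{1}{y-x}\int_x^y\phi(t)\,dt\quad(x\neq y),\qquad S[\phi](x,x)=\phi(x).$$ *)

theory Defs
  imports "HOL-Analysis.Analysis" "HOL-Computational_Algebra.Formal_Power_Series"
begin

definition C1_on01 :: "(real \<Rightarrow> real) \<Rightarrow> bool" where
  "C1_on01 f \<longleftrightarrow> (\<exists>f'. (\<forall>x\<in>{0..1}. (f has_real_derivative f' x) (at x within {0..1}))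
                         \<and> continuous_on {0..1} f')"

definition C2_on01 :: "(real \<Rightarrow> real) \<Rightarrow> bool" where
  "C2_on01 f \<longleftrightarrow> (\<exists>f' f''. (\<forall>x\<in>{0..1}. (f has_real_derivative f' x) (at x within {0..1})
                                   \<and> (f' has_real_derivative f'' x) (at x within {0..1}))
                         \<and> continuous_on {0..1} f'')"

definition der01 :: "(real \<Rightarrow> real) \<Rightarrow> real \<Rightarrow> real" where
  "der01 f x = vector_derivative f (at x within {0..1})"

definition classDR :: "real \<Rightarrow> (real \<Rightarrow> real) \<Rightarrow> (real \<Rightarrow> real) \<Rightarrow> bool" where
  "classDR c a b \<longleftrightarrow>
     0 < c \<and> c < 1 \<and>
     bij_betw a {0..1} {0..c} \<and> bij_betw b {0..1} {c..1} \<and>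
     C2_on01 a \<and> C2_on01 b \<and>
     strict_mono_on {0..1} a \<and> strict_antimono_on {0..1} b \<and>
     a 0 = 0 \<and> a 1 = c \<and> b 0 = 1 \<and> b 1 = c \<and>
     (\<forall>x\<in>{0..1}. der01 a x > 0 \<and> der01 b x < 0) \<and>
     (\<forall>x\<in>{0<..1}. der01 a x < 1 \<and> der01 b x > -1)"

definition admissible_density :: "(real \<Rightarrow> real) \<Rightarrow> bool" where
  "admissible_density \<phi> \<longleftrightarrow> C1_on01 \<phi> \<and> (\<forall>x\<in>{0..1}. \<phi> x > 0) \<and> integral {0..1} \<phi> = 1"

text \<open>Words over {0,1}: bool lists, True = 1. h_w = h_{w_1} o ... o h_{w_k}.\<close>
fun hw :: "(real \<Rightarrow> real) \<Rightarrow> (real \<Rightarrow> real) \<Rightarrow> bool list \<Rightarrow> real \<Rightarrow> real" where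
  "hw a b [] = id"
| "hw a b (l # w) = (if l then b else a) \<circ> hw a b w"

definition ones :: "bool list \<Rightarrow> nat" where
  "ones w = length (filter id w)"

definition pmu :: "(real \<Rightarrow> real) \<Rightarrow> (real \<Rightarrow> real) \<Rightarrow> (real \<Rightarrow> real) \<Rightarrow> bool list \<Rightarrow> real" where
  "pmu a b \<phi> w = integral (hw a b w ` {0..1}) \<phi>"

definition qn :: "(real \<Rightarrow> real) \<Rightarrow> nat \<Rightarrow> real" where
  "qn a n = (a ^^ n) 1"

definition gm :: "(real \<Rightarrow> real) \<Rightarrow> (real \<Rightarrow> real) \<Rightarrow> nat \<Rightarrow> real \<Rightarrow> real" where
  "gm a b m = (a ^^ (m - 1)) \<circ> b"

definition absdq :: "(real \<Rightarrow> real) \<Rightarrow> real \<Rightarrow> real \<Rightarrow> real" where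
  "absdq f x y = (if x = y then \<bar>der01 f x\<bar> else \<bar>(f x - f y) / (x - y)\<bar>)"

definition Sphi :: "(real \<Rightarrow> real) \<Rightarrow> real \<Rightarrow> real \<Rightarrow> real" where
  "Sphi \<phi> x y = (if x = y then \<phi> x
                  else integral {min x y..max x y} \<phi> / (max x y - min x y))"

text \<open>The operator G_{v,s} acting on functions with values in real fps (variable v):
  G[F](x,y) = sum_{m>=1} v^m |dq g_m (x,y)|^s F(g_m x, g_m y), written via its coefficients
  (the coefficient of v^N is a finite sum over 1 <= m <= N).\<close>
definition Gop :: "(real \<Rightarrow> real) \<Rightarrow> (real \<Rightarrow> real) \<Rightarrow> real
                   \<Rightarrow> (real \<Rightarrow> real \<Rightarrow> real fps) \<Rightarrow> (real \<Rightarrow> real \<Rightarrow> real fps)" where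
  "Gop a b s F = (\<lambda>x y. Abs_fps (\<lambda>N. \<Sum>m\<in>{1..N}.
        absdq (gm a b m) x y powr s * fps_nth (F (gm a b m x) (gm a b m y)) (N - m)))"

text \<open>Two-variable formal power series are elements of (real fps) fps:
  the outer variable is t, the inner variable is v.\<close>
definition LHS_series :: "(real \<Rightarrow> real) \<Rightarrow> (real \<Rightarrow> real) \<Rightarrow> (real \<Rightarrow> real) \<Rightarrow> real \<Rightarrow> real fps fps" where
  "LHS_series a b \<phi> s = Abs_fps (\<lambda>K. Abs_fps (\<lambda>N.
      \<Sum>w\<in>{w. length w = N \<and> ones w = K}. pmu a b \<phi> w powr s))"

definition RHS_series :: "(real \<Rightarrow> real) \<Rightarrow> (real \<Rightarrow> real) \<Rightarrow> (real \<Rightarrow> real) \<Rightarrow> real \<Rightarrow> real fps fps" where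
  "RHS_series a b \<phi> s = Abs_fps (\<lambda>K. Abs_fps (\<lambda>N.
      \<Sum>n\<le>N. qn a n powr s *
         fps_nth (((Gop a b s) ^^ K) (\<lambda>x y. fps_const (Sphi \<phi> x y powr s)) 0 (qn a n)) (N - n)))"

end

theory Submission
  imports Defs
begin

definition Wd :: "nat \<Rightarrow> nat \<Rightarrow> bool list set" where
  "Wd N K = {w. length w = N \<and> ones w = K}"
definition Wt :: "nat \<Rightarrow> nat \<Rightarrow> bool list set" where
  "Wt N K = {w. length w = N \<and> ones w = K \<and> (w = [] \<or> last w)}"

lemma finite_Wd: "finite (Wd N K)"
  unfolding Wd_def
  by (rule finite_subset[OF _ finite_lists_length_eq[of "UNIV::bool set" N]]) auto

lemma finite_Wt: "finite (Wt N K)"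
  unfolding Wt_def
  by (rule finite_subset[OF _ finite_lists_length_eq[of "UNIV::bool set" N]]) auto

lemma takeWhile_Not_rep: "takeWhile Not xs = replicate (length (takeWhile Not xs)) False"
  by (induction xs) auto

lemma ones_append[simp]: "ones (u @ v) = ones u + ones v"
  by (simp add: ones_def)

lemma ones_Nil[simp]: "ones [] = 0"
  by (simp add: ones_def)

lemma ones_rep[simp]: "ones (replicate n False) = 0"
  by (simp add: ones_def)

lemma ones_True[simp]: "ones [True] = 1"
  by (simp add: ones_def)

definition tz :: "bool list \<Rightarrow> nat" where
  "tz w = length (takeWhile Not (rev w))"
definition core :: "bool list \<Rightarrow> bool list" where
  "core w = rev (dropWhile Not (rev w))"

lemma core_tz: "core w @ replicate (tz w) False = w"
proof -
  have "rev w = takeWhile Not (rev w) @ dropWhile Not (rev w)" by simp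
  hence "w = rev (dropWhile Not (rev w)) @ rev (takeWhile Not (rev w))"
    by (metis rev_append rev_rev_ident)
  also have "rev (takeWhile Not (rev w)) = replicate (tz w) False"
    unfolding tz_def by (subst takeWhile_Not_rep) simp
  finally show ?thesis unfolding core_def by simp
qed

lemma core_last: "core w = [] \<or> last (core w)"
proof (cases "dropWhile Not (rev w)")
  case Nil thus ?thesis unfolding core_def Nil by simp
next
  case (Cons x xs)
  have "\<not> Not (hd (dropWhile Not (rev w)))"
    by (rule hd_dropWhile) (simp add: Cons)
  thus ?thesis using Cons by (simp add: core_def)
qed

lemma tz_core_app:
  assumes "u = [] \<or> last u"
  shows "tz (u @ replicate n False) = n \<and> core (u @ replicate n False) = u"
proof -
  have h: "takeWhile Not (rev u) = [] \<and> dropWhile Not (rev u) = rev u"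
    using assms by (cases u rule: rev_cases) auto
  have "rev (u @ replicate n False) = replicate n False @ rev u" by simp
  thus ?thesis using h unfolding tz_def core_def
    by (simp add: takeWhile_append dropWhile_append)
qed

lemma bij_A: "bij_betw (\<lambda>(n,u). u @ replicate n False) (SIGMA n:{..N}. Wt (N-n) K) (Wd N K)"
proof (rule bij_betw_byWitness[where f'="\<lambda>w. (tz w, core w)"])
  show "\<forall>x\<in>(SIGMA n:{..N}. Wt (N-n) K). (\<lambda>w. (tz w, core w)) ((\<lambda>(n,u). u @ replicate n False) x) = x"
    using tz_core_app by (auto simp: Wt_def)
  show "\<forall>w\<in>Wd N K. (\<lambda>(n,u). u @ replicate n False) (tz w, core w) = w"
    using core_tz by auto
  show "(\<lambda>(n,u). u @ replicate n False) ` (SIGMA n:{..N}. Wt (N-n) K) \<subseteq> Wd N K"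
    by (auto simp: Wt_def Wd_def)
  have "(tz w, core w) \<in> (SIGMA n:{..N}. Wt (N-n) K)" if w: "w \<in> Wd N K" for w
  proof -
    have e: "core w @ replicate (tz w) False = w" by (rule core_tz)
    hence "length (core w) + tz w = N" "ones (core w) = K"
      using w by (auto simp: Wd_def dest: arg_cong[where f=length] arg_cong[where f=ones])
    thus "(tz w, core w) \<in> (SIGMA n:{..N}. Wt (N-n) K)"
      using core_last[of w] by (auto simp: Wt_def)
  qed
  thus "(\<lambda>w. (tz w, core w)) ` Wd N K \<subseteq> (SIGMA n:{..N}. Wt (N-n) K)" by blast
qed

lemma sum_A:
  "(\<Sum>w\<in>Wd N K. f w) = (\<Sum>n\<le>N. \<Sum>u\<in>Wt (N-n) K. f (u @ replicate n False))"
proof -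
  have "(\<Sum>w\<in>Wd N K. f w) = (\<Sum>x\<in>(SIGMA n:{..N}. Wt (N-n) K). f ((\<lambda>(n,u). u @ replicate n False) x))"
    by (rule sum.reindex_bij_betw[symmetric, OF bij_A])
  also have "\<dots> = (\<Sum>n\<le>N. \<Sum>u\<in>Wt (N-n) K. f (u @ replicate n False))"
    by (subst sum.Sigma) (auto simp: finite_Wt split_def)
  finally show ?thesis .
qed

lemma Wt_Suc: "Wt (Suc M) (Suc K) = (\<lambda>w. w @ [True]) ` Wd M K"
proof
  show "Wt (Suc M) (Suc K) \<subseteq> (\<lambda>w. w @ [True]) ` Wd M K"
  proof
    fix w assume w: "w \<in> Wt (Suc M) (Suc K)"
    hence ne: "w \<noteq> []" and l: "last w" by (auto simp: Wt_def)
    have e: "w = butlast w @ [True]" using ne l by (metis append_butlast_last_id)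
    have "ones w = ones (butlast w) + 1" by (subst e) simp
    hence "butlast w \<in> Wd M K" using w by (auto simp: Wt_def Wd_def)
    thus "w \<in> (\<lambda>w. w @ [True]) ` Wd M K" using e by blast
  qed
  show "(\<lambda>w. w @ [True]) ` Wd M K \<subseteq> Wt (Suc M) (Suc K)"
    by (auto simp: Wt_def Wd_def)
qed

lemma Wt_0_Suc: "Wt 0 (Suc K) = {}"
  by (auto simp: Wt_def ones_def)

lemma Wt_zero: "Wt N 0 = (if N = 0 then {[]} else {})"
proof -
  have "w \<notin> Wt N 0" if "w \<noteq> []" for w
  proof
    assume "w \<in> Wt N 0"
    hence "last w" "filter id w = []" using that unfolding Wt_def ones_def by auto
    thus False using that by (metis filter_empty_conv id_apply last_in_set)
  qed
  moreover have "w \<in> Wt N 0 \<longleftrightarrow> N = 0" if "w = []" for w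
    using that unfolding Wt_def by auto
  ultimately have "w \<in> Wt N 0 \<longleftrightarrow> w = [] \<and> N = 0" for w by blast
  thus ?thesis by auto
qed

lemma sum_B:
  "(\<Sum>w\<in>Wt N (Suc K). f w) =
     (\<Sum>m\<in>{1..N}. \<Sum>u\<in>Wt (N-m) K. f (u @ replicate (m-1) False @ [True]))"
proof (cases N)
  case 0 thus ?thesis by (simp add: Wt_0_Suc)
next
  case (Suc M)
  have inj: "inj_on (\<lambda>w. w @ [True]) (Wd M K)" by (auto simp: inj_on_def)
  have "(\<Sum>w\<in>Wt N (Suc K). f w) = (\<Sum>w\<in>Wd M K. f (w @ [True]))"
    unfolding Suc Wt_Suc by (subst sum.reindex[OF inj]) simp
  also have "\<dots> = (\<Sum>n\<le>M. \<Sum>u\<in>Wt (M-n) K. f (u @ replicate n False @ [True]))"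
    by (subst sum_A) simp
  also have "\<dots> = (\<Sum>m\<in>Suc ` {..M}. \<Sum>u\<in>Wt (N-m) K. f (u @ replicate (m-1) False @ [True]))"
    by (simp add: sum.reindex Suc)
  also have "Suc ` {..M} = {1..N}" using Suc image_Suc_atMost by simp
  finally show ?thesis .
qed

lemma hw_append: "hw a b (u @ v) = hw a b u \<circ> hw a b v"
  by (induction u) (auto simp: comp_assoc)

lemma hw_rep: "hw a b (replicate n False) = a ^^ n"
  by (induction n) auto

lemma gm_hw: "m \<ge> 1 \<Longrightarrow> gm a b m = hw a b (replicate (m-1) False @ [True])"
  by (simp add: gm_def hw_append hw_rep)

lemma mono_img:
  fixes f :: "real \<Rightarrow> real"
  assumes sm: "strict_mono_on {0..1} f" and img: "f ` {0..1} = {p..q}"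
    and x: "x \<in> {0..1}" and y: "y \<in> {0..1}"
  shows "f ` {min x y..max x y} = {min (f x) (f y)..max (f x) (f y)}"
proof -
  have key: "f ` {x..y} = {f x..f y}" if x: "x \<in> {0..1}" and y: "y \<in> {0..1}" and xy: "x \<le> y" for x y
  proof
    show "f ` {x..y} \<subseteq> {f x..f y}"
    proof
      fix z assume "z \<in> f ` {x..y}"
      then obtain t where t: "t \<in> {x..y}" "z = f t" by blast
      have "t \<in> {0..1}" using t x y by auto
      thus "z \<in> {f x..f y}" using t x y
        by (auto intro: strict_mono_on_leD[OF sm])
    qed
    show "{f x..f y} \<subseteq> f ` {x..y}"
    proof
      fix z assume z: "z \<in> {f x..f y}"
      have "f x \<in> {p..q}" "f y \<in> {p..q}" using x y img by auto
      hence "z \<in> f ` {0..1}" using z img by auto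
      then obtain t where t: "t \<in> {0..1}" "z = f t" by blast
      have "\<not> t < x" using strict_mono_onD[OF sm t(1) x] t z by auto
      moreover have "\<not> y < t" using strict_mono_onD[OF sm y t(1)] t z by auto
      ultimately show "z \<in> f ` {x..y}" using t by auto
    qed
  qed
  show ?thesis
  proof (cases "x \<le> y")
    case True
    have "f x \<le> f y" using strict_mono_on_leD[OF sm x y True] .
    thus ?thesis using key[OF x y True] True by (simp add: min_def max_def)
  next
    case False
    hence "y \<le> x" by simp
    have "f y \<le> f x" using strict_mono_on_leD[OF sm y x \<open>y \<le> x\<close>] .
    thus ?thesis using key[OF y x \<open>y \<le> x\<close>] \<open>y \<le> x\<close> by (auto simp: min_def max_def)
  qed
qed

lemma antimono_img:
  fixes f :: "real \<Rightarrow> real"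
  assumes sm: "strict_antimono_on {0..1} f" and img: "f ` {0..1} = {p..q}"
    and x: "x \<in> {0..1}" and y: "y \<in> {0..1}"
  shows "f ` {min x y..max x y} = {min (f x) (f y)..max (f x) (f y)}"
proof -
  have sm': "strict_mono_on {0..1} (\<lambda>t. - f t)"
    using sm by (auto simp: monotone_on_def)
  have img': "(\<lambda>t. - f t) ` {0..1} = {-q..-p}"
  proof -
    have "(\<lambda>t. - f t) ` {0..1} = uminus ` (f ` {0..1})" by (simp add: image_image)
    also have "\<dots> = {-q..-p}" unfolding img by simp
    finally show ?thesis .
  qed
  have "(\<lambda>t. - f t) ` {min x y..max x y} = {min (- f x) (- f y)..max (- f x) (- f y)}"
    by (rule mono_img[OF sm' img' x y])
  hence "uminus ` (\<lambda>t. - f t) ` {min x y..max x y} = uminus ` {min (- f x) (- f y)..max (- f x) (- f y)}"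
    by simp
  thus ?thesis by (simp add: image_image min_def max_def split: if_splits)
qed

definition Iphi :: "(real \<Rightarrow> real) \<Rightarrow> real \<Rightarrow> real \<Rightarrow> real" where
  "Iphi \<phi> x y = integral {min x y..max x y} \<phi>"

context
  fixes a b :: "real \<Rightarrow> real" and c :: real and \<phi> :: "real \<Rightarrow> real" and s :: real
  assumes am: "strict_mono_on {0..1} a" and ai: "a ` {0..1} = {0..c}"
    and bm: "strict_antimono_on {0..1} b" and bi: "b ` {0..1} = {c..1}"
    and c1: "0 < c" and c2: "c < 1"
    and phi: "\<forall>x\<in>{0..1}. \<phi> x \<ge> 0"
begin

lemma a_in: "x \<in> {0..1} \<Longrightarrow> a x \<in> {0..1}"
proof -
  assume "x \<in> {0..1}"
  hence "a x \<in> {0..c}" using ai by blast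
  thus ?thesis using c2 by auto
qed

lemma b_in: "x \<in> {0..1} \<Longrightarrow> b x \<in> {0..1}"
proof -
  assume "x \<in> {0..1}"
  hence "b x \<in> {c..1}" using bi by blast
  thus ?thesis using c1 by auto
qed

lemma hw_in: "x \<in> {0..1} \<Longrightarrow> hw a b u x \<in> {0..1}"
  by (induction u) (auto simp: a_in b_in simp del: atLeastAtMost_iff)

lemma hw_inj: "x \<in> {0..1} \<Longrightarrow> y \<in> {0..1} \<Longrightarrow> x \<noteq> y \<Longrightarrow> hw a b u x \<noteq> hw a b u y"
proof (induction u)
  case Nil thus ?case by simp
next
  case (Cons l w)
  let ?p = "hw a b w x" and ?q = "hw a b w y"
  have pq: "?p \<in> {0..1}" "?q \<in> {0..1}" "?p \<noteq> ?q" using Cons hw_in by auto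
  have "a ?p \<noteq> a ?q"
    using pq strict_mono_onD[OF am pq(1) pq(2)] strict_mono_onD[OF am pq(2) pq(1)]
    by (metis less_irrefl linorder_neq_iff)
  moreover have "b ?p \<noteq> b ?q"
    using pq monotone_onD[OF bm pq(1) pq(2)] monotone_onD[OF bm pq(2) pq(1)]
    by (metis less_irrefl linorder_neq_iff)
  ultimately show ?case by auto
qed

lemma hw_img: "x \<in> {0..1} \<Longrightarrow> y \<in> {0..1} \<Longrightarrow>
  hw a b u ` {min x y..max x y} = {min (hw a b u x) (hw a b u y)..max (hw a b u x) (hw a b u y)}"
proof (induction u)
  case Nil thus ?case by simp
next
  case (Cons l w)
  have pq: "hw a b w x \<in> {0..1}" "hw a b w y \<in> {0..1}" using Cons hw_in by auto
  have "hw a b (l # w) ` {min x y..max x y} = (if l then b else a) ` (hw a b w ` {min x y..max x y})"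
    by (simp add: image_comp)
  also have "\<dots> = (if l then b else a) ` {min (hw a b w x) (hw a b w y)..max (hw a b w x) (hw a b w y)}"
    using Cons by simp
  also have "\<dots> = {min (hw a b (l # w) x) (hw a b (l # w) y)..max (hw a b (l # w) x) (hw a b (l # w) y)}"
  proof (cases l)
    case True thus ?thesis using antimono_img[OF bm bi pq] by simp
  next
    case False thus ?thesis using mono_img[OF am ai pq] by simp
  qed
  finally show ?case .
qed

lemma Iphi_nonneg: "x \<in> {0..1} \<Longrightarrow> y \<in> {0..1} \<Longrightarrow> Iphi \<phi> x y \<ge> 0"
proof -
  assume x: "x \<in> {0..1}" and y: "y \<in> {0..1}"
  have "\<forall>t\<in>{min x y..max x y}. 0 \<le> \<phi> t"
  proof
    fix t assume "t \<in> {min x y..max x y}"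
    hence "t \<in> {0..1}" using x y by (auto simp: min_def max_def split: if_splits)
    thus "0 \<le> \<phi> t" using phi by blast
  qed
  thus ?thesis unfolding Iphi_def
    by (cases "\<phi> integrable_on {min x y..max x y}")
       (auto intro!: integral_nonneg simp: not_integrable_integral)
qed

lemma main:
  "x \<in> {0..1} \<Longrightarrow> y \<in> {0..1} \<Longrightarrow> x \<noteq> y \<Longrightarrow>
    \<bar>x - y\<bar> powr s * fps_nth (((Gop a b s) ^^ K) (\<lambda>x y. fps_const (Sphi \<phi> x y powr s)) x y) N
    = (\<Sum>u\<in>Wt N K. Iphi \<phi> (hw a b u x) (hw a b u y) powr s)"
proof (induction K arbitrary: x y N)
  case 0
  show ?case
  proof (cases "N = 0")
    case True
    have I0: "Iphi \<phi> x y \<ge> 0" using Iphi_nonneg 0 by auto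
    have S: "Sphi \<phi> x y = Iphi \<phi> x y / \<bar>x - y\<bar>"
      using 0 by (auto simp: Sphi_def Iphi_def min_def max_def)
    have "Sphi \<phi> x y \<ge> 0" using I0 by (simp add: S)
    hence "\<bar>x - y\<bar> powr s * Sphi \<phi> x y powr s = (\<bar>x - y\<bar> * Sphi \<phi> x y) powr s"
      by (simp add: powr_mult)
    also have "\<bar>x - y\<bar> * Sphi \<phi> x y = Iphi \<phi> x y" using 0 by (simp add: S)
    finally show ?thesis using True by (simp add: Wt_zero)
  next
    case False thus ?thesis by (simp add: Wt_zero)
  qed
next
  case (Suc K)
  let ?F = "(Gop a b s ^^ K) (\<lambda>x y. fps_const (Sphi \<phi> x y powr s))"
  have "\<bar>x - y\<bar> powr s * fps_nth ((Gop a b s ^^ Suc K) (\<lambda>x y. fps_const (Sphi \<phi> x y powr s)) x y) N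
     = (\<Sum>m\<in>{1..N}. \<bar>x - y\<bar> powr s * (absdq (gm a b m) x y powr s * fps_nth (?F (gm a b m x) (gm a b m y)) (N - m)))"
    by (simp add: Gop_def sum_distrib_left)
  also have "\<dots> = (\<Sum>m\<in>{1..N}. \<Sum>u\<in>Wt (N-m) K.
       Iphi \<phi> (hw a b (u @ replicate (m-1) False @ [True]) x) (hw a b (u @ replicate (m-1) False @ [True]) y) powr s)"
  proof (rule sum.cong[OF refl])
    fix m assume m: "m \<in> {1..N}"
    let ?g = "gm a b m"
    have g: "?g = hw a b (replicate (m-1) False @ [True])" using m gm_hw by auto
    have gx: "?g x \<in> {0..1}" "?g y \<in> {0..1}" "?g x \<noteq> ?g y"
      using g hw_in hw_inj Suc.prems by auto
    have "\<bar>x - y\<bar> powr s * absdq ?g x y powr s = (\<bar>x - y\<bar> * absdq ?g x y) powr s"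
      by (simp add: powr_mult absdq_def)
    also have "\<bar>x - y\<bar> * absdq ?g x y = \<bar>?g x - ?g y\<bar>"
      using Suc.prems by (simp add: absdq_def abs_divide)
    finally have e: "\<bar>x - y\<bar> powr s * absdq ?g x y powr s = \<bar>?g x - ?g y\<bar> powr s" .
    have "\<bar>x - y\<bar> powr s * (absdq ?g x y powr s * fps_nth (?F (?g x) (?g y)) (N - m))
        = \<bar>?g x - ?g y\<bar> powr s * fps_nth (?F (?g x) (?g y)) (N - m)"
      by (simp add: e mult.assoc[symmetric])
    also have "\<dots> = (\<Sum>u\<in>Wt (N-m) K. Iphi \<phi> (hw a b u (?g x)) (hw a b u (?g y)) powr s)"
      by (rule Suc.IH[OF gx])
    also have "\<dots> = (\<Sum>u\<in>Wt (N-m) K.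
       Iphi \<phi> (hw a b (u @ replicate (m-1) False @ [True]) x) (hw a b (u @ replicate (m-1) False @ [True]) y) powr s)"
      by (simp add: g hw_append)
    finally show "\<bar>x - y\<bar> powr s * (absdq ?g x y powr s * fps_nth (?F (?g x) (?g y)) (N - m)) = \<dots>" .
  qed
  also have "\<dots> = (\<Sum>u\<in>Wt N (Suc K). Iphi \<phi> (hw a b u x) (hw a b u y) powr s)"
    by (rule sum_B[symmetric])
  finally show ?case .
qed

end

theorem theorem5p1:
  fixes c :: real and a b \<phi> :: "real \<Rightarrow> real" and s :: real
  assumes "classDR c a b"
    and "admissible_density \<phi>"
    and "s > 0"
  shows "LHS_series a b \<phi> s = RHS_series a b \<phi> s"
proof -
  have am: "strict_mono_on {0..1} a" and bm: "strict_antimono_on {0..1} b"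
    and c1: "0 < c" and c2: "c < 1" and a0: "a 0 = 0"
    and ab: "bij_betw a {0..1} {0..c}" "bij_betw b {0..1} {c..1}"
    using assms(1) unfolding classDR_def by blast+
  have ai: "a ` {0..1} = {0..c}" and bi: "b ` {0..1} = {c..1}"
    using ab unfolding bij_betw_def by blast+
  have phi: "\<forall>x\<in>{0..1}. \<phi> x \<ge> 0"
    using assms(2) unfolding admissible_density_def by (meson less_imp_le)
  note ctx = am ai bm bi c1 c2 phi
  have an0: "(a ^^ n) 0 = 0" for n by (induction n) (auto simp: a0)
  have key: "(\<Sum>w\<in>{w. length w = N \<and> ones w = K}. pmu a b \<phi> w powr s)
     = (\<Sum>n\<le>N. qn a n powr s *
         fps_nth (((Gop a b s) ^^ K) (\<lambda>x y. fps_const (Sphi \<phi> x y powr s)) 0 (qn a n)) (N - n))" for K N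
  proof -
    have "(\<Sum>w\<in>{w. length w = N \<and> ones w = K}. pmu a b \<phi> w powr s)
        = (\<Sum>n\<le>N. \<Sum>u\<in>Wt (N-n) K. pmu a b \<phi> (u @ replicate n False) powr s)"
      using sum_A[of "\<lambda>w. pmu a b \<phi> w powr s" N K] by (simp add: Wd_def)
    also have "\<dots> = (\<Sum>n\<le>N. qn a n powr s *
         fps_nth (((Gop a b s) ^^ K) (\<lambda>x y. fps_const (Sphi \<phi> x y powr s)) 0 (qn a n)) (N - n))"
    proof (rule sum.cong[OF refl])
      fix n assume "n \<in> {..N}"
      have q: "qn a n = hw a b (replicate n False) 1" by (simp add: qn_def hw_rep)
      have q01: "qn a n \<in> {0..1}" using hw_in[OF ctx] q by auto
      have qne: "0 \<noteq> qn a n"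
        using hw_inj[OF ctx, of 0 1 "replicate n False"] q by (simp add: hw_rep an0)
      have p: "pmu a b \<phi> (u @ replicate n False) = Iphi \<phi> (hw a b u 0) (hw a b u (qn a n))" for u
      proof -
        have "hw a b (u @ replicate n False) ` {min 0 1..max 0 1} = {min (hw a b (u @ replicate n False) 0) (hw a b (u @ replicate n False) 1)..max (hw a b (u @ replicate n False) 0) (hw a b (u @ replicate n False) 1)}"
          by (rule hw_img[OF ctx]) auto
        thus ?thesis unfolding pmu_def Iphi_def
          by (simp add: hw_append hw_rep an0 qn_def)
      qed
      have m: "\<bar>0 - qn a n\<bar> powr s *
         fps_nth (((Gop a b s) ^^ K) (\<lambda>x y. fps_const (Sphi \<phi> x y powr s)) 0 (qn a n)) (N - n)
        = (\<Sum>u\<in>Wt (N-n) K. Iphi \<phi> (hw a b u 0) (hw a b u (qn a n)) powr s)"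
        by (rule main[OF ctx]) (use q01 qne in auto)
      have ab0: "\<bar>0 - qn a n\<bar> = qn a n" using q01 by simp
      have "(\<Sum>u\<in>Wt (N-n) K. pmu a b \<phi> (u @ replicate n False) powr s)
          = (\<Sum>u\<in>Wt (N-n) K. Iphi \<phi> (hw a b u 0) (hw a b u (qn a n)) powr s)"
        by (simp only: p)
      also have "\<dots> = \<bar>0 - qn a n\<bar> powr s *
         fps_nth (((Gop a b s) ^^ K) (\<lambda>x y. fps_const (Sphi \<phi> x y powr s)) 0 (qn a n)) (N - n)"
        by (rule m[symmetric])
      also have "\<dots> = qn a n powr s *
         fps_nth (((Gop a b s) ^^ K) (\<lambda>x y. fps_const (Sphi \<phi> x y powr s)) 0 (qn a n)) (N - n)"
        by (simp only: ab0)
      finally show "(\<Sum>u\<in>Wt (N-n) K. pmu a b \<phi> (u @ replicate n False) powr s) = qn a n powr s *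
         fps_nth (((Gop a b s) ^^ K) (\<lambda>x y. fps_const (Sphi \<phi> x y powr s)) 0 (qn a n)) (N - n)" .
    qed
    finally show ?thesis .
  qed
  show ?thesis unfolding LHS_series_def RHS_series_def by (simp add: key)
qed

end
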